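(* Let $n\ge 2$ and $N\ge 2$ be integers, and let $C=\{\boldsymbol{x}_1,\ldots,\boldsymbol{x}_N\}\subset\mathbb{S}^{n-1}$ be a set of $N$ distinct points on the unit sphere of $\mathbb{R}^n$. Put $$d_C:=\min_{1\le i<j\le N}\|\boldsymbol{x}_i-\boldsymbol{x}_j\|_2,\qquad t_C:=\max_{1\le i<j\le N}\boldsymbol{x}_i\cdot\boldsymbol{x}_j .$$ Suppose that: (i) there exist a nonnegative integer $k_1$ and a function $f\in P(k_1,t_C,n)$ such that $N=f^{\#}$; (ii) there exists $t_2\in[-1,t_C)$ such that $f(t)\neq 0$ for all $t\in(t_2,t_C)$; (iii) there exist a nonnegative integer $K_2$ and a function $g\in P(K_2,t_2,n)$ such that $N>g^{\#}$. Then $C$ is a solution of the Tammes problem for $n$ and $N$, that is, $$d_{n,N}=d_C,$$ where $d_{n,N}:=\max\left\{\min_{1\le i<j\le N}\|\boldsymbol{y}_i-\boldsymbol{y}_j\|_2 : \boldsymbol{y}_1,\ldots,\boldsymbol{y}_N\in\mathbb{S}^{n-1}\right\}$.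
   Context: $\mathbb{S}^{n-1}$ denotes the unit sphere in $\mathbb{R}^n$ and $\boldsymbol{x}\cdot\boldsymbol{y}$ the standard inner product. For fixed $n$, the Gegenbauer polynomials $P_k^{(n)}$ are defined by $P_0^{(n)}(t)=1$, $P_1^{(n)}(t)=t$, and for $k\ge 1$ $$P_{k+1}^{(n)}(t)=\frac{(2k+n-2)\,t\,P_k^{(n)}(t)-k\,P_{k-1}^{(n)}(t)}{k+n-2}.$$ For an integer $k\ge 0$ and $\tau\in[-1,1)$, the set $P(k,\tau,n)$ consists of all functions $f$ such that (a) $f(t)=\sum_{i=0}^{k}c_iP_i^{(n)}(t)$ with real coefficients satisfying $c_0>0$ and $c_i\ge 0$ for $i=1,\ldots,k$, and (b) $f(t)\le 0$ for all $t\in[-1,\tau]$. For such $f$ (with this expansion), $f^{\#}:=f(1)/c_0$. *)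

theory Defs
  imports "HOL-Analysis.Analysis"
begin

fun gegen :: "nat \<Rightarrow> nat \<Rightarrow> real \<Rightarrow> real" where
  "gegen n 0 t = 1"
| "gegen n (Suc 0) t = t"
| "gegen n (Suc (Suc k)) t =
     ((2 * real (Suc k) + real n - 2) * t * gegen n (Suc k) t - real (Suc k) * gegen n k t)
       / (real (Suc k) + real n - 2)"

definition gpoly :: "nat \<Rightarrow> nat \<Rightarrow> (nat \<Rightarrow> real) \<Rightarrow> real \<Rightarrow> real" where
  "gpoly n k c t = (\<Sum>i\<le>k. c i * gegen n i t)"

definition inP :: "nat \<Rightarrow> real \<Rightarrow> nat \<Rightarrow> (nat \<Rightarrow> real) \<Rightarrow> bool" where
  "inP k \<tau> n c \<longleftrightarrow> -1 \<le> \<tau> \<and> \<tau> < 1 \<and> c 0 > 0 \<and> (\<forall>i\<in>{1..k}. c i \<ge> 0)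
     \<and> (\<forall>t\<in>{-1..\<tau>}. gpoly n k c t \<le> 0)"

definition fsharp :: "nat \<Rightarrow> nat \<Rightarrow> (nat \<Rightarrow> real) \<Rightarrow> real" where
  "fsharp n k c = gpoly n k c 1 / c 0"

definition minDist :: "('a::real_inner) set \<Rightarrow> real" where
  "minDist C = Min {dist x y | x y. x \<in> C \<and> y \<in> C \<and> x \<noteq> y}"

definition maxInner :: "('a::real_inner) set \<Rightarrow> real" where
  "maxInner C = Max {x \<bullet> y | x y. x \<in> C \<and> y \<in> C \<and> x \<noteq> y}"

text \<open>Tammes number d_{n,N} for the sphere in real^'n: the maximum (supremum, attained by
compactness) over all N-tuples of points on the unit sphere of their minimal pairwise distance.\<close>
definition tammes_d :: "'n::finite itself \<Rightarrow> nat \<Rightarrow> real" where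
  "tammes_d _ N = Sup {Min {dist (y i) (y j) | i j. i < j \<and> j < N} | y :: nat \<Rightarrow> real^'n.
                        \<forall>i<N. y i \<in> sphere 0 1}"

end

theory Submission
  imports Defs "HOL-Library.Multiset"
begin

type_synonym 'n mpoly = "'n multiset \<Rightarrow> real"

definition pmul :: "'n \<Rightarrow> 'n mpoly \<Rightarrow> 'n mpoly" where
  "pmul i p = (\<lambda>a. if i \<in># a then p (a - {#i#}) else 0)"
definition pder :: "'n \<Rightarrow> 'n mpoly \<Rightarrow> 'n mpoly" where
  "pder i p = (\<lambda>a. real (count a i + 1) * p (add_mset i a))"

lemma pmul_add_mset[simp]: "pmul i p (add_mset i a) = p a"
  by (simp add: pmul_def)

lemma pder_pmul: "pder i (pmul j p) = (\<lambda>a. pmul j (pder i p) a + (if i = j then p a else 0))"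
proof (rule ext)
  fix a
  show "pder i (pmul j p) a = pmul j (pder i p) a + (if i = j then p a else 0)"
  proof (cases "j \<in># a")
    case True
    then obtain b where b: "a = add_mset j b" by (metis multi_member_split)
    show ?thesis
      by (cases "i = j") (auto simp: pder_def pmul_def b add_mset_commute algebra_simps)
  next
    case False
    then show ?thesis
      by (cases "i = j") (auto simp: pder_def pmul_def add_mset_commute algebra_simps)
  qed
qed

lemma pmul_pmul: "pmul i (pmul j p) = pmul j (pmul i p)"
proof (rule ext)
  fix a
  show "pmul i (pmul j p) a = pmul j (pmul i p) a"
    apply (cases "i = j", simp)
    apply (auto simp: pmul_def in_diff_count diff_right_commute add_mset_commute)
    done
qed

lemma pmul_sum: "pmul i (\<lambda>a. \<Sum>j\<in>A. f j a) = (\<lambda>a. \<Sum>j\<in>A. pmul i (f j) a)"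
  by (auto simp: pmul_def)
lemma pder_sum: "pder i (\<lambda>a. \<Sum>j\<in>A. f j a) = (\<lambda>a. \<Sum>j\<in>A. pder i (f j) a)"
  by (auto simp: pder_def sum_distrib_left)
lemma pmul_lin: "pmul i (\<lambda>a. u * f a + v * g a) = (\<lambda>a. u * pmul i f a + v * pmul i g a)"
  by (auto simp: pmul_def)
lemma pder_lin: "pder i (\<lambda>a. u * f a + v * g a) = (\<lambda>a. u * pder i f a + v * pder i g a)"
  by (auto simp: pder_def algebra_simps)
lemma pmul_scale: "pmul i (\<lambda>a. u * f a) = (\<lambda>a. u * pmul i f a)"
  by (auto simp: pmul_def)
lemma pder_scale: "pder i (\<lambda>a. u * f a) = (\<lambda>a. u * pder i f a)"
  by (auto simp: pder_def algebra_simps)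
lemma pmul_add: "pmul i (\<lambda>a. f a + g a) = (\<lambda>a. pmul i f a + pmul i g a)"
  by (auto simp: pmul_def)
lemma pder_add: "pder i (\<lambda>a. f a + g a) = (\<lambda>a. pder i f a + pder i g a)"
  by (auto simp: pder_def algebra_simps)
lemma pmul_diff: "pmul i (\<lambda>a. f a - g a) = (\<lambda>a. pmul i f a - pmul i g a)"
  by (auto simp: pmul_def)
lemma pder_diff: "pder i (\<lambda>a. f a - g a) = (\<lambda>a. pder i f a - pder i g a)"
  by (auto simp: pder_def algebra_simps)
lemma pmul_zero: "pmul i (\<lambda>a. 0) = (\<lambda>a. 0)" by (auto simp: pmul_def)
lemma pder_zero: "pder i (\<lambda>a. 0) = (\<lambda>a. 0)" by (auto simp: pder_def)

lemmas plin = pmul_sum pder_sum pmul_scale pder_scale pmul_add pder_add pmul_diff pder_diff pmul_zero pder_zero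

definition Lx :: "real^'n \<Rightarrow> 'n::finite mpoly \<Rightarrow> 'n mpoly" where
  "Lx x p = (\<lambda>a. \<Sum>i\<in>UNIV. x$i * pmul i p a)"
definition Dx :: "real^'n \<Rightarrow> 'n::finite mpoly \<Rightarrow> 'n mpoly" where
  "Dx x p = (\<lambda>a. \<Sum>i\<in>UNIV. x$i * pder i p a)"
definition Sq :: "'n::finite mpoly \<Rightarrow> 'n mpoly" where
  "Sq p = (\<lambda>a. \<Sum>i\<in>UNIV. pmul i (pmul i p) a)"
definition Lap :: "'n::finite mpoly \<Rightarrow> 'n mpoly" where
  "Lap p = (\<lambda>a. \<Sum>i\<in>UNIV. pder i (pder i p) a)"

lemma pder_Lx: "pder i (Lx x p) = (\<lambda>a. \<Sum>j\<in>UNIV. x$j * pder i (pmul j p) a)"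
  by (simp add: Lx_def plin)
lemma pmul_Dx: "pmul j (Dx x p) = (\<lambda>a. \<Sum>i\<in>UNIV. x$i * pmul j (pder i p) a)"
  by (simp add: Dx_def plin)

lemma sum_delta_mult: "finite A \<Longrightarrow> (\<Sum>j\<in>A. (f j::real) * (if i = j then c else 0)) = (if i \<in> A then f i * c else 0)"
proof -
  assume "finite A"
  have "(\<Sum>j\<in>A. f j * (if i = j then c else 0)) = (\<Sum>j\<in>A. if i = j then f j * c else 0)"
    by (rule sum.cong) auto
  then show ?thesis using \<open>finite A\<close> by (simp add: sum.delta)
qed

lemma pder_Lx': "pder i (Lx x p) a = Lx x (pder i p) a + x$i * p a"
proof -
  have "pder i (Lx x p) a = (\<Sum>j\<in>UNIV. x$j * pmul j (pder i p) a + x$j * (if i = j then p a else 0))"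
    by (simp add: pder_Lx pder_pmul distrib_left)
  also have "\<dots> = Lx x (pder i p) a + x$i * p a"
    by (simp add: sum.distrib sum_delta_mult Lx_def)
  finally show ?thesis .
qed

lemma Dx_Lx: "Dx x (Lx x p) = (\<lambda>a. (x \<bullet> x) * p a + Lx x (Dx x p) a)"
proof (rule ext)
  fix a
  have "Dx x (Lx x p) a = (\<Sum>i\<in>UNIV. x$i * Lx x (pder i p) a) + (\<Sum>i\<in>UNIV. x$i * x$i * p a)"
    by (simp add: Dx_def pder_Lx' distrib_left sum.distrib mult.assoc)
  also have "(\<Sum>i\<in>UNIV. x$i * Lx x (pder i p) a) = Lx x (Dx x p) a"
    unfolding Lx_def pmul_Dx sum_distrib_left by (subst sum.swap) (simp add: mult.left_commute)
  also have "(\<Sum>i\<in>UNIV. x$i * x$i * p a) = (x \<bullet> x) * p a"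
    by (simp add: inner_vec_def sum_distrib_right)
  finally show "Dx x (Lx x p) a = (x \<bullet> x) * p a + Lx x (Dx x p) a" by simp
qed

lemma pder_pmul_pt: "pder i (pmul j p) a = pmul j (pder i p) a + (if i = j then p a else 0)"
  by (simp add: pder_pmul)

lemma pder_pmul2: "pder i (pmul j (pmul j p)) a = pmul j (pmul j (pder i p)) a + (if i = j then 2 * pmul j p a else 0)"
proof (cases "i = j")
  case True
  have "pder i (pmul j (pmul j p)) = (\<lambda>a. pmul j (pder i (pmul j p)) a + pmul j p a)"
    using True by (simp add: pder_pmul)
  also have "pder i (pmul j p) = (\<lambda>a. pmul j (pder i p) a + p a)"
    using True by (simp add: pder_pmul)
  finally show ?thesis using True by (simp add: pmul_add)
next
  case False
  then show ?thesis by (simp add: pder_pmul)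
qed

lemma pder_Sq: "pder i (Sq p) a = Sq (pder i p) a + 2 * pmul i p a"
proof -
  have "pder i (Sq p) a = (\<Sum>j\<in>UNIV. pmul j (pmul j (pder i p)) a + (if i = j then 2 * pmul j p a else 0))"
    by (simp add: Sq_def pder_sum pder_pmul2)
  also have "\<dots> = Sq (pder i p) a + 2 * pmul i p a"
    by (simp add: sum.distrib Sq_def sum.delta)
  finally show ?thesis .
qed

lemma Dx_Sq: "Dx x (Sq p) = (\<lambda>a. 2 * Lx x p a + Sq (Dx x p) a)"
proof (rule ext)
  fix a
  have "Dx x (Sq p) a = (\<Sum>i\<in>UNIV. x$i * Sq (pder i p) a) + 2 * Lx x p a"
    by (simp add: Dx_def pder_Sq distrib_left sum.distrib Lx_def sum_distrib_left mult.left_commute)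
  also have "(\<Sum>i\<in>UNIV. x$i * Sq (pder i p) a) = Sq (Dx x p) a"
    unfolding Sq_def Dx_def pmul_sum pmul_scale sum_distrib_left by (subst sum.swap) simp
  finally show "Dx x (Sq p) a = 2 * Lx x p a + Sq (Dx x p) a" by simp
qed

lemma pder_Lx_fun: "pder i (Lx x p) = (\<lambda>a. Lx x (pder i p) a + x$i * p a)"
  using pder_Lx' by blast

lemma Lap_Lx: "Lap (Lx x p) = (\<lambda>a. 2 * Dx x p a + Lx x (Lap p) a)"
proof (rule ext)
  fix a
  have "Lap (Lx x p) a = (\<Sum>i\<in>UNIV. Lx x (pder i (pder i p)) a) + 2 * Dx x p a"
    by (simp add: Lap_def pder_Lx_fun pder_add pder_scale pder_Lx' sum.distrib Dx_def sum_distrib_left)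
  also have "(\<Sum>i\<in>UNIV. Lx x (pder i (pder i p)) a) = Lx x (Lap p) a"
    unfolding Lx_def Lap_def pmul_sum sum_distrib_left by (subst sum.swap) simp
  finally show "Lap (Lx x p) a = 2 * Dx x p a + Lx x (Lap p) a" by simp
qed

lemma size_sum_count: "size (a::'n::finite multiset) = (\<Sum>i\<in>UNIV. count a i)"
proof (induction a)
  case empty
  then show ?case by simp
next
  case (add x a)
  have "(\<Sum>i\<in>UNIV. count (add_mset x a) i) = (\<Sum>i\<in>UNIV. count a i + (if i = x then 1 else 0))"
    by (rule sum.cong) auto
  also have "\<dots> = (\<Sum>i\<in>UNIV. count a i) + 1"
    by (simp add: sum.distrib sum.delta')
  finally show ?case using add by simp
qed

lemma euler_pt: "(\<Sum>i\<in>UNIV. pmul i (pder i p) a) = real (size a) * p (a::'n::finite multiset)"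
proof -
  have "pmul i (pder i p) a = real (count a i) * p a" for i
    by (auto simp: pmul_def pder_def insert_DiffM not_in_iff)
  then have "(\<Sum>i\<in>UNIV. pmul i (pder i p) a) = (\<Sum>i\<in>UNIV. real (count a i)) * p a"
    by (simp add: sum_distrib_right)
  also have "(\<Sum>i\<in>UNIV. real (count a i)) = real (size a)"
    by (simp add: size_sum_count)
  finally show ?thesis .
qed

lemma Lap_Sq: "Lap (Sq p) = (\<lambda>a. 2 * real CARD('n) * p a + 4 * real (size a) * p a + Sq (Lap p) a)"
  for p :: "'n::finite mpoly"
proof (rule ext)
  fix a :: "'n multiset"
  have e: "pder i (Sq p) = (\<lambda>a. Sq (pder i p) a + 2 * pmul i p a)" for i
    using pder_Sq by blast
  have "Lap (Sq p) a = (\<Sum>i\<in>UNIV. 4 * pmul i (pder i p) a + (Sq (pder i (pder i p)) a + 2 * p a))"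
    by (simp add: Lap_def e pder_add pder_scale pder_Sq pder_pmul_pt)
  also have "\<dots> = (\<Sum>i\<in>UNIV. Sq (pder i (pder i p)) a) + 4 * (\<Sum>i\<in>UNIV. pmul i (pder i p) a) + 2 * real CARD('n) * p a"
    by (simp add: sum.distrib sum_distrib_left)
  also have "(\<Sum>i\<in>UNIV. Sq (pder i (pder i p)) a) = Sq (Lap p) a"
    unfolding Sq_def Lap_def pmul_sum by (subst sum.swap) simp
  finally show "Lap (Sq p) a = 2 * real CARD('n) * p a + 4 * real (size a) * p a + Sq (Lap p) a"
    by (simp add: euler_pt)
qed

lemma pmul3: "pmul j (pmul i (pmul i p)) = pmul i (pmul i (pmul j p))"
  by (metis pmul_pmul)

lemma Lx_Sq: "Lx x (Sq p) = Sq (Lx x p)"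
proof (rule ext)
  fix a
  show "Lx x (Sq p) a = Sq (Lx x p) a"
    unfolding Lx_def Sq_def pmul_sum pmul_scale sum_distrib_left
    by (subst sum.swap) (simp add: pmul3)
qed

lemma Lx_lin: "Lx x (\<lambda>a. u * f a - v * g a) = (\<lambda>a. u * Lx x f a - v * Lx x g a)"
  by (simp add: Lx_def pmul_diff pmul_scale sum_distrib_left sum_subtractf algebra_simps)
lemma Dx_lin: "Dx x (\<lambda>a. u * f a - v * g a) = (\<lambda>a. u * Dx x f a - v * Dx x g a)"
  by (simp add: Dx_def pder_diff pder_scale sum_distrib_left sum_subtractf algebra_simps)
lemma Sq_lin: "Sq (\<lambda>a. u * f a - v * g a) = (\<lambda>a. u * Sq f a - v * Sq g a)"
  by (simp add: Sq_def pmul_diff pmul_scale sum_distrib_left sum_subtractf algebra_simps)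
lemma Lap_lin: "Lap (\<lambda>a. u * f a - v * g a) = (\<lambda>a. u * Lap f a - v * Lap g a)"
  by (simp add: Lap_def pder_diff pder_scale sum_distrib_left sum_subtractf algebra_simps)
lemma Lx_scale: "Lx x (\<lambda>a. u * f a) = (\<lambda>a. u * Lx x f a)"
  by (simp add: Lx_def pmul_scale sum_distrib_left algebra_simps)
lemma Dx_scale: "Dx x (\<lambda>a. u * f a) = (\<lambda>a. u * Dx x f a)"
  by (simp add: Dx_def pder_scale sum_distrib_left algebra_simps)
lemma Sq_scale: "Sq (\<lambda>a. u * f a) = (\<lambda>a. u * Sq f a)"
  by (simp add: Sq_def pmul_scale sum_distrib_left algebra_simps)
lemma Lap_scale: "Lap (\<lambda>a. u * f a) = (\<lambda>a. u * Lap f a)"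
  by (simp add: Lap_def pder_scale sum_distrib_left algebra_simps)
lemma Lx_zero: "Lx x (\<lambda>a. 0) = (\<lambda>a. 0)" by (simp add: Lx_def pmul_zero)
lemma Dx_zero: "Dx x (\<lambda>a. 0) = (\<lambda>a. 0)" by (simp add: Dx_def pder_zero)
lemma Sq_zero: "Sq (\<lambda>a. 0) = (\<lambda>a. 0)" by (simp add: Sq_def pmul_zero)
lemma Lap_zero: "Lap (\<lambda>a. 0) = (\<lambda>a. 0)" by (simp add: Lap_def pder_zero)

definition one :: "'n mpoly" where "one = (\<lambda>a. if a = {#} then 1 else 0)"

lemma pder_one: "pder i one = (\<lambda>a. 0)" by (auto simp: pder_def one_def)
lemma Dx_one: "Dx x one = (\<lambda>a. 0)" by (simp add: Dx_def pder_one)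
lemma Lap_one: "Lap one = (\<lambda>a. 0)" by (simp add: Lap_def pder_one pder_zero)

definition ga :: "nat \<Rightarrow> nat \<Rightarrow> real" where "ga n m = (2 * real m + real n - 2) / (real m + real n - 2)"
definition gb :: "nat \<Rightarrow> nat \<Rightarrow> real" where "gb n m = real m / (real m + real n - 2)"

fun Zh :: "real^'n::finite \<Rightarrow> nat \<Rightarrow> 'n mpoly" where
  "Zh x 0 = one"
| "Zh x (Suc 0) = Lx x one"
| "Zh x (Suc (Suc m)) = (\<lambda>a. ga CARD('n) (Suc m) * Lx x (Zh x (Suc m)) a - gb CARD('n) (Suc m) * Sq (Zh x m) a)"

definition hom :: "nat \<Rightarrow> 'n mpoly \<Rightarrow> bool" where "hom k p \<longleftrightarrow> (\<forall>a. size a \<noteq> k \<longrightarrow> p a = 0)"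

lemma hom_pmul: fixes p :: "'n mpoly" shows "hom k p \<Longrightarrow> hom (Suc k) (pmul i p)"
  unfolding hom_def
proof (intro allI impI)
  fix a :: "'n multiset" assume h: "\<forall>a. size a \<noteq> k \<longrightarrow> p a = 0" and s: "size a \<noteq> Suc k"
  show "pmul i p a = 0"
  proof (cases "i \<in># a")
    case True
    then obtain b where "a = add_mset i b" by (metis multi_member_split)
    then show ?thesis using h s by (auto simp: pmul_def)
  qed (simp add: pmul_def)
qed
lemma hom_Lx: "hom k p \<Longrightarrow> hom (Suc k) (Lx x p)"
  using hom_pmul[of k p] by (auto simp: hom_def Lx_def)
lemma hom_Sq: "hom k p \<Longrightarrow> hom (Suc (Suc k)) (Sq p)"
proof -
  assume "hom k p"
  then have "hom (Suc (Suc k)) (pmul i (pmul i p))" for i by (intro hom_pmul)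
  then show ?thesis by (auto simp: hom_def Sq_def)
qed
lemma hom_Zh: "hom m (Zh x m)"
proof (induction x m rule: Zh.induct)
  case (1 x)
  then show ?case by (auto simp: hom_def one_def)
next
  case (2 x)
  have "hom 0 (one :: 'a mpoly)" by (auto simp: hom_def one_def)
  then show ?case using hom_Lx by fastforce
next
  case (3 x m)
  then show ?case using hom_Lx[OF 3(1)] hom_Sq[OF 3(2)] by (auto simp: hom_def)
qed

lemma coef1: "n \<ge> 2 \<Longrightarrow> 2 * ga n 1 - 2 * gb n 1 = 2"
proof -
  assume "n \<ge> 2"
  then have d: "1 + real n - 2 \<noteq> 0" by simp
  have "2 * ga n 1 - 2 * gb n 1 = 2 * ((2 + real n - 2) - 1) / (1 + real n - 2)"
    by (simp add: ga_def gb_def diff_divide_distrib)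
  also have "\<dots> = 2" using d by (simp add: field_simps)
  finally show ?thesis .
qed
lemma coef2: "n \<ge> 2 \<Longrightarrow> 2 * real (Suc m) * ga n (Suc m) - gb n (Suc m) * (2 * real n + 4 * real m) = 0"
  by (simp add: ga_def gb_def field_simps)
lemma coef3r: assumes "(A::real) > 1" shows
 "(A + m + 2)/A * ((A + m)/(A - 1)) + (A + m + 2)/A * (m+2) - 2 * ((m + 2)/A) = (m+3) * ((A + m)/(A-1))"
proof -
  have d: "A \<noteq> 0" "A - 1 \<noteq> 0" using assms by auto
  show ?thesis using d by (simp add: field_simps)
qed
lemma coef4r: assumes "(A::real) > 1" shows
 "(A + m + 2)/A * ((m+1)/(A - 1)) + (m + 2)/A * (m+1) = (m+3) * ((m+1)/(A-1))"
proof -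
  have d: "A \<noteq> 0" "A - 1 \<noteq> 0" using assms by auto
  show ?thesis using d by (simp add: field_simps)
qed
lemma coef3: assumes "n \<ge> 2" shows "ga n (Suc (Suc m)) * ga n (Suc m) + ga n (Suc (Suc m)) * real (Suc (Suc m)) - 2 * gb n (Suc (Suc m)) = real (Suc (Suc (Suc m))) * ga n (Suc m)"
proof -
  define A where "A = real m + real n"
  have A: "A > 1" using assms by (simp add: A_def)
  have e: "ga n (Suc (Suc m)) = (A + m + 2)/A" "ga n (Suc m) = (A + m)/(A - 1)"
     "gb n (Suc (Suc m)) = (real m + 2)/A"
    by (simp_all add: ga_def gb_def algebra_simps A_def)
  show ?thesis unfolding e using coef3r[OF A, of "real m"] by (simp add: algebra_simps)
qed
lemma coef4: assumes "n \<ge> 2" shows "ga n (Suc (Suc m)) * gb n (Suc m) + gb n (Suc (Suc m)) * real (Suc m) = real (Suc (Suc (Suc m))) * gb n (Suc m)"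
proof -
  define A where "A = real m + real n"
  have A: "A > 1" using assms by (simp add: A_def)
  have e: "ga n (Suc (Suc m)) = (A + m + 2)/A" "gb n (Suc m) = (real m + 1)/(A - 1)"
     "gb n (Suc (Suc m)) = (real m + 2)/A"
    by (simp_all add: ga_def gb_def algebra_simps A_def)
  show ?thesis unfolding e using coef4r[OF A, of "real m"] by (simp add: algebra_simps)
qed

lemma hom_size: "hom m p \<Longrightarrow> real (size a) * p a = real m * p a"
  by (cases "size a = m") (auto simp: hom_def)

lemma Zh_main:
  fixes x :: "real^'n::finite"
  assumes n2: "CARD('n) \<ge> 2" and x1: "x \<bullet> x = 1"
  shows "(Lap (Zh x m) = (\<lambda>a. 0) \<and> Dx x (Zh x (Suc m)) = (\<lambda>a. real (Suc m) * Zh x m a))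
       \<and> (Lap (Zh x (Suc m)) = (\<lambda>a. 0) \<and> Dx x (Zh x (Suc (Suc m))) = (\<lambda>a. real (Suc (Suc m)) * Zh x (Suc m) a))"
proof (induction m)
  case 0
  have L0: "Lap (Zh x 0) = (\<lambda>a. 0)" by (simp add: Lap_one)
  have D1: "Dx x (Zh x (Suc 0)) = (\<lambda>a. real (Suc 0) * Zh x 0 a)"
    by (simp add: Dx_Lx Dx_one Lx_zero x1)
  have L1: "Lap (Zh x (Suc 0)) = (\<lambda>a. 0)"
    by (simp add: Lap_Lx Dx_one Lap_one Lx_zero)
  have D2: "Dx x (Zh x (Suc (Suc 0))) = (\<lambda>a. real (Suc (Suc 0)) * Zh x (Suc 0) a)"
  proof (rule ext)
    fix a
    have "Dx x (Zh x (Suc (Suc 0))) a = ga CARD('n) 1 * (Zh x 1 a + Zh x 1 a) - gb CARD('n) 1 * (2 * Zh x 1 a)"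
      by (simp add: Dx_lin Dx_Lx Dx_Sq x1 Dx_one Sq_zero Lx_zero)
    also have "\<dots> = (2 * ga CARD('n) 1 - 2 * gb CARD('n) 1) * Zh x 1 a"
      by (simp add: algebra_simps)
    also have "\<dots> = 2 * Zh x 1 a" using coef1[OF n2] by simp
    finally show "Dx x (Zh x (Suc (Suc 0))) a = real (Suc (Suc 0)) * Zh x (Suc 0) a" by simp
  qed
  show ?case using L0 D1 L1 D2 by simp
next
  case (Suc m)
  have L0: "Lap (Zh x m) = (\<lambda>a. 0)" and D1: "Dx x (Zh x (Suc m)) = (\<lambda>a. real (Suc m) * Zh x m a)"
   and L1: "Lap (Zh x (Suc m)) = (\<lambda>a. 0)" and D2: "Dx x (Zh x (Suc (Suc m))) = (\<lambda>a. real (Suc (Suc m)) * Zh x (Suc m) a)"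
    using Suc.IH by auto
  have Z2: "Zh x (Suc (Suc m)) = (\<lambda>a. ga CARD('n) (Suc m) * Lx x (Zh x (Suc m)) a - gb CARD('n) (Suc m) * Sq (Zh x m) a)"
    by simp
  have Z3: "Zh x (Suc (Suc (Suc m))) = (\<lambda>a. ga CARD('n) (Suc (Suc m)) * Lx x (Zh x (Suc (Suc m))) a - gb CARD('n) (Suc (Suc m)) * Sq (Zh x (Suc m)) a)"
    by (simp only: Zh.simps)
  have L2: "Lap (Zh x (Suc (Suc m))) = (\<lambda>a. 0)"
  proof (rule ext)
    fix a
    have "Lap (Zh x (Suc (Suc m))) a = ga CARD('n) (Suc m) * (2 * (real (Suc m) * Zh x m a))
       - gb CARD('n) (Suc m) * (2 * real CARD('n) * Zh x m a + 4 * (real (size a) * Zh x m a))"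
      unfolding Z2 Lap_lin Lap_Lx Lap_Sq D1 L1 L0 Lx_zero Sq_zero by (simp add: algebra_simps)
    also have "\<dots> = (2 * real (Suc m) * ga CARD('n) (Suc m) - gb CARD('n) (Suc m) * (2 * real CARD('n) + 4 * real m)) * Zh x m a"
      unfolding hom_size[OF hom_Zh[of m x], of a] by (simp add: algebra_simps)
    also have "\<dots> = 0" using coef2[OF n2, of m] by simp
    finally show "Lap (Zh x (Suc (Suc m))) a = 0" .
  qed
  have D3: "Dx x (Zh x (Suc (Suc (Suc m)))) = (\<lambda>a. real (Suc (Suc (Suc m))) * Zh x (Suc (Suc m)) a)"
  proof (rule ext)
    fix a
    let ?A = "Lx x (Zh x (Suc m)) a" and ?B = "Sq (Zh x m) a"
    let ?a = "ga CARD('n) (Suc m)" and ?b = "gb CARD('n) (Suc m)"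
    let ?a' = "ga CARD('n) (Suc (Suc m))" and ?b' = "gb CARD('n) (Suc (Suc m))"
    have "Dx x (Zh x (Suc (Suc (Suc m)))) a = ?a' * (Zh x (Suc (Suc m)) a + real (Suc (Suc m)) * ?A)
        - ?b' * (2 * ?A + real (Suc m) * ?B)"
      unfolding Z3 Dx_lin Dx_Lx Dx_Sq D2 D1 x1 Lx_scale Sq_scale by (simp del: Zh.simps)
    also have "\<dots> = ?a' * (?a * ?A - ?b * ?B + real (Suc (Suc m)) * ?A) - ?b' * (2 * ?A + real (Suc m) * ?B)"
      by (simp only: Z2)
    also have "\<dots> = (?a' * ?a + ?a' * real (Suc (Suc m)) - 2 * ?b') * ?A - (?a' * ?b + ?b' * real (Suc m)) * ?B"
      by (simp only: algebra_simps)
    also have "\<dots> = real (Suc (Suc (Suc m))) * ?a * ?A - real (Suc (Suc (Suc m))) * ?b * ?B"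
      by (simp only: coef3[OF n2, of m] coef4[OF n2, of m])
    also have "\<dots> = real (Suc (Suc (Suc m))) * Zh x (Suc (Suc m)) a"
      by (simp only: Z2 algebra_simps)
    finally show "Dx x (Zh x (Suc (Suc (Suc m)))) a = real (Suc (Suc (Suc m))) * Zh x (Suc (Suc m)) a" .
  qed
  show ?case using L1 D2 L2 D3 by simp
qed

definition Ms :: "nat \<Rightarrow> 'n::finite multiset set" where "Ms k = {a. size a = k}"

lemma finite_Ms[simp]: "finite (Ms k :: 'n::finite multiset set)"
proof -
  have "Ms k = multisets_of_size (UNIV :: 'n set) k" by (auto simp: Ms_def multisets_of_size_def)
  then show ?thesis by auto
qed

lemma Ms_0: "Ms 0 = {{#}}" by (auto simp: Ms_def)

lemma reindex_Ms:
  "(\<Sum>b\<in>Ms (Suc k). if i \<in># b then h b else 0) = (\<Sum>a\<in>Ms k. (h (add_mset i a) :: real))"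
proof -
  have "(\<Sum>b\<in>Ms (Suc k). if i \<in># b then h b else 0) = (\<Sum>b\<in>{b\<in>Ms (Suc k). i \<in># b}. h b)"
    by (simp add: sum.inter_filter)
  also have "{b\<in>Ms (Suc k). i \<in># b} = add_mset i ` Ms k"
  proof (rule set_eqI, rule iffI)
    fix b assume "b \<in> {b\<in>Ms (Suc k). i \<in># b}"
    then have "b = add_mset i (b - {#i#})" "b - {#i#} \<in> Ms k"
      by (auto simp: Ms_def size_Diff_singleton)
    then show "b \<in> add_mset i ` Ms k" by blast
  qed (auto simp: Ms_def)
  also have "(\<Sum>b\<in>add_mset i ` Ms k. h b) = (\<Sum>a\<in>Ms k. h (add_mset i a))"
    by (subst sum.reindex) (auto simp: inj_on_def)
  finally show ?thesis .
qed

definition mf :: "'n::finite multiset \<Rightarrow> real" where "mf a = (\<Prod>i\<in>UNIV. fact (count a i))"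
definition mon :: "real^'n::finite \<Rightarrow> 'n multiset \<Rightarrow> real" where "mon y a = (\<Prod>i\<in>UNIV. (y$i) ^ (count a i))"

lemma prod_update_UNIV:
  fixes f g :: "'n::finite \<Rightarrow> real"
  assumes "\<And>j. j \<noteq> i \<Longrightarrow> g j = f j"
  shows "(\<Prod>j\<in>UNIV. g j) = g i * (\<Prod>j\<in>UNIV - {i}. f j)"
proof -
  have "(\<Prod>j\<in>UNIV. g j) = g i * (\<Prod>j\<in>UNIV - {i}. g j)"
    by (simp add: prod.remove)
  also have "(\<Prod>j\<in>UNIV - {i}. g j) = (\<Prod>j\<in>UNIV - {i}. f j)"
    by (rule prod.cong) (auto simp: assms)
  finally show ?thesis .
qed

lemma mf_add: "mf (add_mset i a) = real (count a i + 1) * mf a"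
proof -
  have "mf (add_mset i a) = fact (count a i + 1) * (\<Prod>j\<in>UNIV - {i}. fact (count a j))"
    unfolding mf_def by (subst prod_update_UNIV[where f = "\<lambda>j. fact (count a j)"]) auto
  also have "mf a = fact (count a i) * (\<Prod>j\<in>UNIV - {i}. fact (count a j))"
    unfolding mf_def by (subst prod_update_UNIV[where f = "\<lambda>j. fact (count a j)"]) auto
  ultimately show ?thesis by (simp add: algebra_simps)
qed

lemma mon_add: "mon y (add_mset i a) = y$i * mon y a"
proof -
  have "mon y (add_mset i a) = (y$i) ^ (count a i + 1) * (\<Prod>j\<in>UNIV - {i}. (y$j) ^ (count a j))"
    unfolding mon_def by (subst prod_update_UNIV[where f = "\<lambda>j. (y$j) ^ (count a j)"]) auto
  also have "mon y a = (y$i) ^ (count a i) * (\<Prod>j\<in>UNIV - {i}. (y$j) ^ (count a j))"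
    unfolding mon_def by (subst prod_update_UNIV[where f = "\<lambda>j. (y$j) ^ (count a j)"]) auto
  ultimately show ?thesis by (simp add: algebra_simps)
qed

lemma mf_pos: "mf a > 0" by (simp add: mf_def prod_pos)

definition FF :: "nat \<Rightarrow> 'n::finite mpoly \<Rightarrow> 'n mpoly \<Rightarrow> real" where
  "FF k p q = (\<Sum>a\<in>Ms k. mf a * p a * q a)"
definition ev :: "nat \<Rightarrow> 'n::finite mpoly \<Rightarrow> real^'n \<Rightarrow> real" where
  "ev k p y = (\<Sum>a\<in>Ms k. p a * mon y a)"

lemma FF_sym: "FF k p q = FF k q p" by (simp add: FF_def mult_ac)

lemma FF_pmul: "FF (Suc k) (pmul i p) q = FF k p (pder i q)"
proof -
  have "FF (Suc k) (pmul i p) q = (\<Sum>b\<in>Ms (Suc k). if i \<in># b then mf b * p (b - {#i#}) * q b else 0)"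
    unfolding FF_def by (rule sum.cong) (auto simp: pmul_def)
  also have "\<dots> = (\<Sum>a\<in>Ms k. mf (add_mset i a) * p a * q (add_mset i a))"
    by (simp add: reindex_Ms)
  also have "\<dots> = FF k p (pder i q)"
    unfolding FF_def pder_def mf_add by (simp add: mult_ac)
  finally show ?thesis .
qed

lemma FF_Lx: "FF (Suc k) p (Lx y q) = FF k (Dx y p) q"
proof -
  have "FF (Suc k) p (Lx y q) = (\<Sum>i\<in>UNIV. y$i * FF (Suc k) (pmul i q) p)"
    unfolding FF_def Lx_def sum_distrib_left by (subst sum.swap) (simp add: mult_ac)
  also have "\<dots> = (\<Sum>i\<in>UNIV. y$i * FF k q (pder i p))" by (simp add: FF_pmul)
  also have "\<dots> = FF k (Dx y p) q"
    unfolding FF_def Dx_def sum_distrib_left sum_distrib_right by (subst sum.swap) (simp add: mult_ac)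
  finally show ?thesis .
qed

lemma FF_Sq: "FF (Suc (Suc k)) p (Sq R) = FF k (Lap p) R"
proof -
  have "FF (Suc (Suc k)) p (Sq R) = (\<Sum>i\<in>UNIV. FF (Suc (Suc k)) (pmul i (pmul i R)) p)"
    unfolding FF_def Sq_def sum_distrib_left by (subst sum.swap) (simp add: mult_ac)
  also have "\<dots> = (\<Sum>i\<in>UNIV. FF k R (pder i (pder i p)))"
    by (simp add: FF_pmul FF_sym[of "Suc k"])
  also have "\<dots> = FF k (Lap p) R"
    unfolding FF_def Lap_def sum_distrib_left sum_distrib_right by (subst sum.swap) (simp add: mult_ac)
  finally show ?thesis .
qed

lemma Sq_small: "size a < 2 \<Longrightarrow> Sq R a = 0"
proof -
  assume s: "size a < 2"
  have "pmul i (pmul i R) a = 0" for i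
  proof (cases "i \<in># a")
    case True
    then obtain b where b: "a = add_mset i b" by (metis multi_member_split)
    with s have "\<not> i \<in># b" by (cases b) auto
    then show ?thesis using b by (simp add: pmul_def)
  qed (simp add: pmul_def)
  then show ?thesis by (simp add: Sq_def)
qed

lemma ev_pmul: "ev (Suc k) (pmul i p) y = y$i * ev k p y"
proof -
  have "ev (Suc k) (pmul i p) y = (\<Sum>b\<in>Ms (Suc k). if i \<in># b then p (b - {#i#}) * mon y b else 0)"
    unfolding ev_def by (rule sum.cong) (auto simp: pmul_def)
  also have "\<dots> = (\<Sum>a\<in>Ms k. p a * mon y (add_mset i a))"
    by (simp add: reindex_Ms)
  finally show ?thesis by (simp add: mon_add ev_def sum_distrib_left mult_ac)
qed

lemma ev_Lx: "ev (Suc k) (Lx x p) y = (x \<bullet> y) * ev k p y"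
proof -
  have "ev (Suc k) (Lx x p) y = (\<Sum>i\<in>UNIV. x$i * ev (Suc k) (pmul i p) y)"
    unfolding ev_def Lx_def sum_distrib_left sum_distrib_right by (subst sum.swap) (simp add: mult_ac)
  then show ?thesis by (simp add: ev_pmul inner_vec_def sum_distrib_left sum_distrib_right mult_ac)
qed

lemma ev_Sq: "ev (Suc (Suc k)) (Sq p) y = (y \<bullet> y) * ev k p y"
proof -
  have "ev (Suc (Suc k)) (Sq p) y = (\<Sum>i\<in>UNIV. ev (Suc (Suc k)) (pmul i (pmul i p)) y)"
    unfolding ev_def Sq_def sum_distrib_right by (subst sum.swap) simp
  then show ?thesis by (simp add: ev_pmul inner_vec_def sum_distrib_left sum_distrib_right mult_ac)
qed

lemma ev_lin: "ev k (\<lambda>a. u * f a - v * g a) y = u * ev k f y - v * ev k g y"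
  by (simp add: ev_def sum_distrib_left sum_subtractf algebra_simps)

lemma ev_Dx: "ev k (Dx y p) y = real (Suc k) * ev (Suc k) p y"
proof -
  have "ev k (Dx y p) y = (\<Sum>i\<in>UNIV. \<Sum>a\<in>Ms k. real (count (add_mset i a) i) * p (add_mset i a) * mon y (add_mset i a))"
    unfolding ev_def Dx_def pder_def sum_distrib_right by (subst sum.swap) (simp add: mon_add mult_ac)
  also have "\<dots> = (\<Sum>i\<in>UNIV. \<Sum>b\<in>Ms (Suc k). if i \<in># b then real (count b i) * p b * mon y b else 0)"
    by (simp add: reindex_Ms)
  also have "\<dots> = (\<Sum>i\<in>UNIV. \<Sum>b\<in>Ms (Suc k). real (count b i) * p b * mon y b)"
    by (intro sum.cong refl) (auto simp: not_in_iff)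
  also have "\<dots> = (\<Sum>b\<in>Ms (Suc k). real (size b) * p b * mon y b)"
    by (subst sum.swap) (simp add: size_sum_count sum_distrib_right)
  also have "\<dots> = real (Suc k) * ev (Suc k) p y"
    by (simp add: ev_def Ms_def sum_distrib_left mult_ac)
  finally show ?thesis .
qed

primrec Lp :: "real^'n::finite \<Rightarrow> nat \<Rightarrow> 'n mpoly" where
  "Lp y 0 = one"
| "Lp y (Suc k) = Lx y (Lp y k)"

lemma FF_Lp: "FF k p (Lp y k) = fact k * ev k p y"
proof (induction k arbitrary: p)
  case 0
  then show ?case by (simp add: FF_def ev_def Ms_0 one_def mf_def mon_def)
next
  case (Suc k)
  show ?case by (simp add: FF_Lx Suc.IH ev_Dx)
qed

lemma ev_one: "ev 0 one y = 1"
  by (simp add: ev_def Ms_0 one_def mon_def)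

lemma ev_Zh:
  fixes x y :: "real^'n::finite"
  assumes y1: "y \<bullet> y = 1"
  shows "ev m (Zh x m) y = gegen CARD('n) m (x \<bullet> y)"
proof (induction x m rule: Zh.induct)
  case (1 x)
  then show ?case by (simp add: ev_one)
next
  case (2 x)
  then show ?case by (simp add: ev_Lx ev_one)
next
  case (3 x m)
  have "ev (Suc (Suc m)) (Zh x (Suc (Suc m))) y
      = ga CARD('n) (Suc m) * ((x \<bullet> y) * gegen CARD('n) (Suc m) (x \<bullet> y)) - gb CARD('n) (Suc m) * gegen CARD('n) m (x \<bullet> y)"
    by (simp only: Zh.simps ev_lin ev_Lx ev_Sq 3 y1)
  also have "\<dots> = gegen CARD('n) (Suc (Suc m)) (x \<bullet> y)"
    by (simp add: ga_def gb_def diff_divide_distrib)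
  finally show ?case .
qed

fun Aco :: "nat \<Rightarrow> nat \<Rightarrow> real" where
  "Aco n 0 = 1"
| "Aco n (Suc 0) = 1"
| "Aco n (Suc (Suc m)) = ga n (Suc m) * Aco n (Suc m)"

lemma Aco_pos: "n \<ge> 2 \<Longrightarrow> Aco n m > 0"
proof (induction n m rule: Aco.induct)
  case (3 n m)
  then have "ga n (Suc m) > 0" by (auto simp: ga_def intro!: divide_pos_pos)
  then show ?case using 3 by simp
qed auto

lemma Lx_add: "Lx x (\<lambda>a. u * f a + g a) = (\<lambda>a. u * Lx x f a + Lx x g a)"
  by (simp add: Lx_def pmul_add pmul_scale sum_distrib_left sum.distrib algebra_simps)

lemma Zh_decomp: "\<exists>R. Zh x m = (\<lambda>a. Aco CARD('n) m * Lp x m a + Sq R a)"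
  for x :: "real^'n::finite"
proof (induction x m rule: Zh.induct)
  case (1 x)
  show ?case by (rule exI[of _ "\<lambda>a. 0"]) (simp add: Sq_zero)
next
  case (2 x)
  show ?case by (rule exI[of _ "\<lambda>a. 0"]) (simp add: Sq_zero)
next
  case (3 x m)
  then obtain R where R: "Zh x (Suc m) = (\<lambda>a. Aco CARD('n) (Suc m) * Lp x (Suc m) a + Sq R a)" by blast
  let ?R = "\<lambda>b. ga CARD('n) (Suc m) * Lx x R b - gb CARD('n) (Suc m) * Zh x m b"
  have "Zh x (Suc (Suc m)) = (\<lambda>a. Aco CARD('n) (Suc (Suc m)) * Lp x (Suc (Suc m)) a + Sq ?R a)"
    by (simp only: Zh.simps R Lx_add Lx_Sq Sq_lin Lp.simps Aco.simps) (simp add: algebra_simps)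
  then show ?case by blast
qed

lemma FF_Zh:
  fixes x y :: "real^'n::finite"
  assumes n2: "CARD('n) \<ge> 2" and x1: "x \<bullet> x = 1" and y1: "y \<bullet> y = 1"
  shows "FF m (Zh x m) (Zh y m) = Aco CARD('n) m * fact m * gegen CARD('n) m (x \<bullet> y)"
proof -
  obtain R where R: "Zh y m = (\<lambda>a. Aco CARD('n) m * Lp y m a + Sq R a)" using Zh_decomp by blast
  have lap: "Lap (Zh x m) = (\<lambda>a. 0)" using Zh_main[OF n2 x1, of m] by blast
  have "FF m (Zh x m) (Zh y m) = Aco CARD('n) m * FF m (Zh x m) (Lp y m) + FF m (Zh x m) (Sq R)"
    unfolding R FF_def by (simp add: sum_distrib_left sum.distrib algebra_simps)
  also have "FF m (Zh x m) (Sq R) = 0"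
  proof (cases "m < 2")
    case True
    then show ?thesis by (simp add: FF_def Ms_def Sq_small)
  next
    case False
    then obtain k where k: "m = Suc (Suc k)" by (metis add_2_eq_Suc le_Suc_ex not_less)
    have lap': "Lap (Zh x (Suc (Suc k))) = (\<lambda>a. 0)" using lap k by simp
    show ?thesis unfolding k FF_Sq lap' by (simp add: FF_def)
  qed
  also have "FF m (Zh x m) (Lp y m) = fact m * gegen CARD('n) m (x \<bullet> y)"
    by (simp add: FF_Lp ev_Zh[OF y1])
  finally show ?thesis by simp
qed

lemma gegen_pd:
  fixes v :: "nat \<Rightarrow> real^'n::finite"
  assumes n2: "CARD('n) \<ge> 2" and v1: "\<And>i. i < N \<Longrightarrow> v i \<bullet> v i = 1"
  shows "(\<Sum>i<N. \<Sum>j<N. gegen CARD('n) m (v i \<bullet> v j)) \<ge> 0"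
proof -
  let ?c = "Aco CARD('n) m * fact m"
  have c: "?c > 0" using Aco_pos[OF n2] by simp
  have c': "Aco CARD('n) m \<noteq> 0" using Aco_pos[OF n2, of m] by simp
  have e: "gegen CARD('n) m (v i \<bullet> v j) = FF m (Zh (v i) m) (Zh (v j) m) / ?c" if "i < N" "j < N" for i j
    using FF_Zh[OF n2 v1[OF that(1)] v1[OF that(2)], of m] c' by simp
  have "(\<Sum>i<N. \<Sum>j<N. FF m (Zh (v i) m) (Zh (v j) m)) = (\<Sum>a\<in>Ms m. mf a * (\<Sum>i<N. Zh (v i) m a)^2)"
    unfolding FF_def power2_eq_square sum_distrib_left sum_distrib_right
    by (subst sum.swap, rule sum.cong[OF refl], subst sum.swap) (simp add: mult_ac)
  also have "\<dots> \<ge> 0" by (intro sum_nonneg mult_nonneg_nonneg) (auto simp: mf_pos less_imp_le)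
  finally have "(\<Sum>i<N. \<Sum>j<N. FF m (Zh (v i) m) (Zh (v j) m)) / ?c \<ge> 0" using c by simp
  also have "(\<Sum>i<N. \<Sum>j<N. FF m (Zh (v i) m) (Zh (v j) m)) / ?c = (\<Sum>i<N. \<Sum>j<N. gegen CARD('n) m (v i \<bullet> v j))"
    by (simp add: e sum_divide_distrib)
  finally show ?thesis .
qed


lemma delsarte:
  fixes v :: "nat \<Rightarrow> real^'n::finite"
  assumes n2: "CARD('n) \<ge> 2" and v1: "\<And>i. i < N \<Longrightarrow> v i \<bullet> v i = 1"
    and c: "\<forall>i\<in>{1..k}. c i \<ge> 0"
  shows "(\<Sum>i<N. \<Sum>j<N. gpoly CARD('n) k c (v i \<bullet> v j)) \<ge> c 0 * (real N * real N)"
proof -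
  let ?S = "\<lambda>l. \<Sum>i<N. \<Sum>j<N. gegen CARD('n) l (v i \<bullet> v j)"
  have "(\<Sum>i<N. \<Sum>j<N. gpoly CARD('n) k c (v i \<bullet> v j)) = (\<Sum>l\<le>k. c l * ?S l)"
    unfolding gpoly_def sum_distrib_left
    by (subst sum.swap, rule sum.cong[OF refl], subst sum.swap) simp
  also have "\<dots> = c 0 * ?S 0 + (\<Sum>l\<in>{1..k}. c l * ?S l)"
  proof -
    have "{..k} = insert 0 {1..k}" by auto
    then show ?thesis by simp
  qed
  also have "?S 0 = real N * real N" by simp
  finally have eq: "(\<Sum>i<N. \<Sum>j<N. gpoly CARD('n) k c (v i \<bullet> v j)) = c 0 * (real N * real N) + (\<Sum>l\<in>{1..k}. c l * ?S l)" .
  moreover have "(\<Sum>l\<in>{1..k}. c l * ?S l) \<ge> 0"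
  proof -
    have S: "?S l \<ge> 0" for l by (rule gegen_pd[OF n2]) (use v1 in auto)
    show ?thesis
    proof (rule sum_nonneg)
      fix l assume l: "l \<in> {1..k}"
      show "0 \<le> c l * ?S l" by (rule mult_nonneg_nonneg) (use c l in auto, rule S)
    qed
  qed
  ultimately show ?thesis by simp
qed

lemma dist_sq_unit:
  fixes u w :: "'a::real_inner"
  assumes "u \<bullet> u = 1" "w \<bullet> w = 1"
  shows "(dist u w)^2 = 2 - 2 * (u \<bullet> w)"
  using assms by (simp add: dist_norm power2_norm_eq_inner inner_diff_left inner_diff_right inner_commute)

lemma inner_ge_m1:
  fixes u w :: "'a::real_inner"
  assumes "norm u = 1" "norm w = 1"
  shows "u \<bullet> w \<ge> -1"
  using Cauchy_Schwarz_ineq2[of u w] assms by auto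

lemma diag_split:
  fixes h :: "nat \<Rightarrow> nat \<Rightarrow> real"
  shows "(\<Sum>i<N. \<Sum>j<N. h i j) = (\<Sum>i<N. h i i) + (\<Sum>i<N. \<Sum>j\<in>{..<N} - {i}. h i j)"
proof -
  have "(\<Sum>j<N. h i j) = h i i + (\<Sum>j\<in>{..<N} - {i}. h i j)" if "i < N" for i
    using that by (simp add: sum.remove)
  then show ?thesis by (simp add: sum.distrib)
qed

lemma nonpos_sum_zero:
  fixes g :: "nat \<Rightarrow> nat \<Rightarrow> real"
  assumes "\<And>i j. i < N \<Longrightarrow> j \<in> {..<N} - {i} \<Longrightarrow> g i j \<le> 0"
    and "(\<Sum>i<N. \<Sum>j\<in>{..<N} - {i}. g i j) \<ge> 0"
  shows "\<And>i j. i < N \<Longrightarrow> j \<in> {..<N} - {i} \<Longrightarrow> g i j = 0"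
proof -
  fix i j assume ij: "i < N" "j \<in> {..<N} - {i}"
  have inner: "(\<Sum>j\<in>{..<N} - {i}. g i j) \<le> 0" if "i < N" for i
    using assms(1) that by (intro sum_nonpos) auto
  have "(\<Sum>i<N. \<Sum>j\<in>{..<N} - {i}. - g i j) = 0"
    using assms(2) inner by (simp add: sum_negf) (meson antisym sum_nonpos lessThan_iff)
  moreover have "\<forall>i\<in>{..<N}. 0 \<le> (\<Sum>j\<in>{..<N} - {i}. - g i j)"
  proof
    fix i assume "i \<in> {..<N}"
    then have "\<forall>j\<in>{..<N} - {i}. 0 \<le> - g i j" using assms(1) by auto
    then show "0 \<le> (\<Sum>j\<in>{..<N} - {i}. - g i j)" by (metis sum_nonneg)
  qed
  ultimately have "\<forall>i\<in>{..<N}. (\<Sum>j\<in>{..<N} - {i}. - g i j) = 0"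
    using sum_nonneg_eq_0_iff[of "{..<N}" "\<lambda>i. \<Sum>j\<in>{..<N} - {i}. - g i j"] by simp
  then have "(\<Sum>j\<in>{..<N} - {i}. - g i j) = 0" using ij by auto
  moreover have "\<forall>j\<in>{..<N} - {i}. 0 \<le> - g i j" using assms(1) ij by auto
  ultimately have "\<forall>j\<in>{..<N} - {i}. - g i j = 0"
    using sum_nonneg_eq_0_iff[of "{..<N} - {i}" "\<lambda>j. - g i j"] by simp
  then show "g i j = 0" using ij by auto
qed

lemma no_better:
  fixes y :: "nat \<Rightarrow> real^'n::finite"
  assumes n2: "CARD('n) \<ge> 2" and N2: "N \<ge> 2"
    and yn: "\<And>i. i < N \<Longrightarrow> norm (y i) = 1"
    and lt: "\<And>i j. i < N \<Longrightarrow> j < N \<Longrightarrow> i \<noteq> j \<Longrightarrow> y i \<bullet> y j < \<tau>"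
    and f: "inP k1 \<tau> CARD('n) c" and fN: "real N = fsharp CARD('n) k1 c"
    and nz: "\<forall>t\<in>{t2<..<\<tau>}. gpoly CARD('n) k1 c t \<noteq> 0"
    and g: "inP K2 t2 CARD('n) e" and gN: "real N > fsharp CARD('n) K2 e"
  shows False
proof -
  have y1: "y i \<bullet> y i = 1" if "i < N" for i
    using yn[OF that] by (simp add: power2_norm_eq_inner[symmetric])
  have ge: "y i \<bullet> y j \<ge> -1" if "i < N" "j < N" for i j
    using inner_ge_m1 yn that by blast
  have c0: "c 0 > 0" and cnn: "\<forall>i\<in>{1..k1}. c i \<ge> 0" and fneg0: "\<forall>t\<in>{-1..\<tau>}. gpoly CARD('n) k1 c t \<le> 0"
    using f by (auto simp: inP_def)
  have e0: "e 0 > 0" and enn: "\<forall>i\<in>{1..K2}. e i \<ge> 0" and gneg0: "\<forall>t\<in>{-1..t2}. gpoly CARD('n) K2 e t \<le> 0"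
    using g by (auto simp: inP_def)
  have f1: "gpoly CARD('n) k1 c 1 = real N * c 0" using fN c0 by (simp add: fsharp_def)
  have fneg: "gpoly CARD('n) k1 c (y i \<bullet> y j) \<le> 0" if "i < N" "j \<in> {..<N} - {i}" for i j
    using fneg0 ge[of i j] lt[of i j] that by (auto intro: less_imp_le)
  have "(\<Sum>i<N. \<Sum>j<N. gpoly CARD('n) k1 c (y i \<bullet> y j)) \<ge> c 0 * (real N * real N)"
    by (rule delsarte[OF n2 y1 cnn])
  moreover have "(\<Sum>i<N. gpoly CARD('n) k1 c (y i \<bullet> y i)) = real N * (real N * c 0)"
    using y1 f1 by simp
  ultimately have "(\<Sum>i<N. \<Sum>j\<in>{..<N} - {i}. gpoly CARD('n) k1 c (y i \<bullet> y j)) \<ge> 0"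
    unfolding diag_split[of "\<lambda>i j. gpoly CARD('n) k1 c (y i \<bullet> y j)"] by (simp add: algebra_simps)
  from nonpos_sum_zero[of N "\<lambda>i j. gpoly CARD('n) k1 c (y i \<bullet> y j)", OF fneg this]
  have fz: "gpoly CARD('n) k1 c (y i \<bullet> y j) = 0" if "i < N" "j \<in> {..<N} - {i}" for i j
    using that by blast
  have le2: "y i \<bullet> y j \<le> t2" if "i < N" "j \<in> {..<N} - {i}" for i j
  proof (rule ccontr)
    assume "\<not> y i \<bullet> y j \<le> t2"
    then have "y i \<bullet> y j \<in> {t2<..<\<tau>}" using lt[of i j] that by auto
    then show False using nz fz[OF that] by auto
  qed
  have gneg: "gpoly CARD('n) K2 e (y i \<bullet> y j) \<le> 0" if "i < N" "j \<in> {..<N} - {i}" for i j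
    using gneg0 ge[of i j] le2[OF that] that by auto
  have "(\<Sum>i<N. \<Sum>j\<in>{..<N} - {i}. gpoly CARD('n) K2 e (y i \<bullet> y j)) \<le> 0"
    using gneg by (intro sum_nonpos) auto
  moreover have "(\<Sum>i<N. \<Sum>j<N. gpoly CARD('n) K2 e (y i \<bullet> y j)) \<ge> e 0 * (real N * real N)"
    by (rule delsarte[OF n2 y1 enn])
  moreover have "(\<Sum>i<N. gpoly CARD('n) K2 e (y i \<bullet> y i)) = real N * gpoly CARD('n) K2 e 1"
    using y1 by simp
  ultimately have "e 0 * (real N * real N) \<le> real N * gpoly CARD('n) K2 e 1"
    unfolding diag_split[of "\<lambda>i j. gpoly CARD('n) K2 e (y i \<bullet> y j)"] by simp
  then have "e 0 * real N \<le> gpoly CARD('n) K2 e 1" using N2 by (simp add: mult.commute mult.left_commute)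
  then have "real N \<le> fsharp CARD('n) K2 e" using e0 by (simp add: fsharp_def field_simps)
  then show False using gN by simp
qed


theorem theorem3p1:
  fixes C :: "(real^'n) set" and N k1 K2 :: nat and c e :: "nat \<Rightarrow> real" and t2 :: real
  assumes "CARD('n) \<ge> 2" and "N \<ge> 2"
    and "finite C" and "card C = N" and "C \<subseteq> sphere 0 1"
    and "inP k1 (maxInner C) CARD('n) c" and "real N = fsharp CARD('n) k1 c"
    and "-1 \<le> t2" and "t2 < maxInner C"
    and "\<forall>t\<in>{t2<..<maxInner C}. gpoly CARD('n) k1 c t \<noteq> 0"
    and "inP K2 t2 CARD('n) e" and "real N > fsharp CARD('n) K2 e"
  shows "tammes_d TYPE('n) N = minDist C"
proof -
  note n2 = assms(1) and N2 = assms(2) and fin = assms(3) and cardC = assms(4) and sph = assms(5)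
  define DS where "DS = {dist x y | x y. x \<in> C \<and> y \<in> C \<and> x \<noteq> y}"
  define IS where "IS = {x \<bullet> y | x y. x \<in> C \<and> y \<in> C \<and> x \<noteq> y}"
  have finDS: "finite DS"
    by (rule finite_subset[of _ "(\<lambda>(x,y). dist x y) ` (C \<times> C)"]) (auto simp: DS_def fin)
  have finIS: "finite IS"
    by (rule finite_subset[of _ "(\<lambda>(x,y). x \<bullet> y) ` (C \<times> C)"]) (auto simp: IS_def fin)
  obtain h where h: "bij_betw h {0..<N} C" using ex_bij_betw_nat_finite[OF fin] cardC by blast
  have hC: "h i \<in> C" if "i < N" for i using h that by (auto simp: bij_betw_def)
  have hinj: "h i \<noteq> h j" if "i < N" "j < N" "i \<noteq> j" for i j
    using h that by (auto simp: bij_betw_def inj_on_def)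
  have hsurj: "\<exists>i<N. h i = x" if "x \<in> C" for x
    using h that by (auto simp: bij_betw_def)
  have Dh: "{dist (h i) (h j) | i j. i < j \<and> j < N} = DS"
  proof (rule set_eqI, rule iffI)
    fix t assume "t \<in> {dist (h i) (h j) | i j. i < j \<and> j < N}"
    then obtain i j where "t = dist (h i) (h j)" "i < j" "j < N" by blast
    then show "t \<in> DS" unfolding DS_def using hC hinj[of i j] by force
  next
    fix t assume "t \<in> DS"
    then obtain x y where xy: "t = dist x y" "x \<in> C" "y \<in> C" "x \<noteq> y" unfolding DS_def by blast
    obtain i j where ij: "i < N" "j < N" "h i = x" "h j = y" using hsurj xy by metis
    then have "i \<noteq> j" using xy by auto
    then show "t \<in> {dist (h i) (h j) | i j. i < j \<and> j < N}"
    proof (cases "i < j")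
      case True then show ?thesis using xy ij by blast
    next
      case False
      then have "j < i" using \<open>i \<noteq> j\<close> by simp
      then have "t = dist (h j) (h i) \<and> j < i \<and> i < N" using xy ij by (auto simp: dist_commute)
      then show ?thesis by blast
    qed
  qed
  have DSne: "DS \<noteq> {}" using Dh N2 by force
  have d_def: "minDist C = Min DS" by (simp add: minDist_def DS_def)
  have t_def: "maxInner C = Max IS" by (simp add: maxInner_def IS_def)
  obtain x0 y0 where x0: "x0 \<in> C" "y0 \<in> C" "x0 \<noteq> y0" "minDist C = dist x0 y0"
    using Min_in[OF finDS DSne] unfolding d_def DS_def by blast
  have "x0 \<bullet> y0 \<in> IS" using x0 unfolding IS_def by blast
  then have x0t: "x0 \<bullet> y0 \<le> maxInner C" unfolding t_def using finIS by simp
  have unit: "u \<bullet> u = 1" if "u \<in> sphere (0::real^'n) 1" for u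
    using that by (simp add: power2_norm_eq_inner[symmetric])
  have "x0 \<bullet> x0 = 1" "y0 \<bullet> y0 = 1" using unit sph x0 by auto
  then have d2: "(minDist C)^2 \<ge> 2 - 2 * maxInner C"
    using x0 x0t dist_sq_unit[of x0 y0] by simp
  have d0: "minDist C \<ge> 0" using x0 by simp
  define T where "T = {Min {dist (y i) (y j) | i j. i < j \<and> j < N} | y :: nat \<Rightarrow> real^'n.
                        \<forall>i<N. y i \<in> sphere 0 1}"
  have finD: "finite {dist (y i) (y j) | i j. i < j \<and> j < N}" for y :: "nat \<Rightarrow> real^'n"
    by (rule finite_subset[of _ "(\<lambda>(i,j). dist (y i) (y j)) ` ({..<N} \<times> {..<N})"]) auto
  have neD: "{dist (y i) (y j) | i j. i < j \<and> j < N} \<noteq> {}" for y :: "nat \<Rightarrow> real^'n"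
    using N2 by force
  have inT: "minDist C \<in> T"
  proof -
    have "\<forall>i<N. h i \<in> sphere 0 1" using hC sph by blast
    moreover have "Min {dist (h i) (h j) | i j. i < j \<and> j < N} = minDist C" using Dh d_def by simp
    ultimately show ?thesis unfolding T_def by force
  qed
  have ub: "t \<le> minDist C" if "t \<in> T" for t
  proof (rule ccontr)
    assume nle: "\<not> t \<le> minDist C"
    from that obtain y :: "nat \<Rightarrow> real^'n" where y: "\<forall>i<N. y i \<in> sphere 0 1"
      and t: "t = Min {dist (y i) (y j) | i j. i < j \<and> j < N}" unfolding T_def by blast
    have big: "dist (y i) (y j) > minDist C" if "i < N" "j < N" "i \<noteq> j" for i j
    proof -
      have "dist (y i) (y j) \<in> {dist (y i) (y j) | i j. i < j \<and> j < N}"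
      proof (cases "i < j")
        case True then show ?thesis using that by blast
      next
        case False then have "j < i" using that by simp
        then have "dist (y i) (y j) = dist (y j) (y i) \<and> j < i \<and> i < N" using that by (simp add: dist_commute)
        then show ?thesis by blast
      qed
      then have "t \<le> dist (y i) (y j)" unfolding t using finD by simp
      then show ?thesis using nle by simp
    qed
    have lt: "y i \<bullet> y j < maxInner C" if "i < N" "j < N" "i \<noteq> j" for i j
    proof -
      have "(minDist C)^2 < (dist (y i) (y j))^2"
        using big[OF that] d0 by (intro power_strict_mono) auto
      moreover have "(dist (y i) (y j))^2 = 2 - 2 * (y i \<bullet> y j)"
        using dist_sq_unit unit y that by blast
      ultimately show ?thesis using d2 by simp
    qed
    show False
      by (rule no_better[OF n2 N2 _ lt assms(6) assms(7) assms(10) assms(11) assms(12)])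
         (use y in auto)
  qed
  have "Sup T = minDist C" by (rule cSup_eq_maximum[OF inT ub])
  then show ?thesis unfolding tammes_d_def T_def .
qed

end
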